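(* Let $F\in\mathbb C[u]$ be a polynomial of degree $6$ without multiple roots. Then there are only finitely many pairs $(P,Q)$ of polynomials in $\mathbb C[u]$ with $\deg P=3$, $\deg Q=2$ and $F=P^2-Q^3$. *)

theory Defs
  imports Complex_Main "HOL-Computational_Algebra.Polynomial"
begin

end

theory Submission
  imports Defs "HOL-Analysis.Analysis" "HOL-Computational_Algebra.Fundamental_Theorem_Algebra"
    "HOL-Computational_Algebra.Polynomial_Factorial" "HOL-Computational_Algebra.Field_as_Ring"
begin



type_synonym tup = "complex \<times> complex \<times> complex \<times> complex \<times> complex"

definition cv :: "complex poly \<Rightarrow> tup" where
  "cv p = (coeff p 0, coeff p 1, coeff p 2, coeff p 3, coeff p 4)"

definition emb :: "tup \<Rightarrow> complex poly" where
  "emb v = [:fst v, fst (snd v), fst (snd (snd v)), fst (snd (snd (snd v))), snd (snd (snd (snd v))):]"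

definition pn :: "complex poly \<Rightarrow> real" where "pn p = norm (cv p)"

definition pconv :: "(nat \<Rightarrow> complex poly) \<Rightarrow> complex poly \<Rightarrow> bool" where
  "pconv X p \<longleftrightarrow> (\<forall>i. (\<lambda>n. coeff (X n) i) \<longlonglongrightarrow> coeff p i)"

lemma cv_emb: "cv (emb v) = v"
  by (cases v) (auto simp: cv_def emb_def numeral_eq_Suc)

lemma degree_emb: "degree (emb v) \<le> 4"
  unfolding emb_def by (simp add: degree_pCons_le order.trans[OF degree_pCons_le])

lemma emb_cv: assumes "degree p \<le> 4" shows "emb (cv p) = p"
proof -
  have "coeff (emb (cv p)) i = coeff p i" for i
  proof -
    consider "i = 0" | "i = 1" | "i = 2" | "i = 3" | "i = 4" | "i > 4" by linarith
    then show ?thesis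
    proof cases
      case 6
      then have "coeff p i = 0" using assms by (intro coeff_eq_0) simp
      moreover have "coeff (emb (cv p)) i = 0" using 6 degree_emb[of "cv p"] by (intro coeff_eq_0) simp
      ultimately show ?thesis by simp
    qed (auto simp: emb_def cv_def numeral_eq_Suc)
  qed
  then show ?thesis by (simp add: poly_eq_iff)
qed

lemma cv_diff: "cv (p - q) = cv p - cv q"
  by (simp add: cv_def)

lemma cv_add: "cv (p + q) = cv p + cv q"
  by (simp add: cv_def)

lemma cv_smult: "cv (smult (complex_of_real r) p) = r *\<^sub>R cv p"
  by (simp add: cv_def scaleR_conv_of_real)

lemma cv_zero_iff: assumes "degree p \<le> 4" shows "cv p = 0 \<longleftrightarrow> p = 0"
proof
  assume "cv p = 0"
  then have "emb (cv p) = 0" by (simp add: emb_def zero_prod_def)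
  then show "p = 0" using emb_cv[OF assms] by simp
qed (simp add: cv_def zero_prod_def)

lemma pn_nonneg: "pn p \<ge> 0" by (simp add: pn_def)

lemma pn_zero_iff: assumes "degree p \<le> 4" shows "pn p = 0 \<longleftrightarrow> p = 0"
  using cv_zero_iff[OF assms] by (simp add: pn_def)

lemma pn_zero[simp]: "pn 0 = 0" by (simp add: pn_def cv_def zero_prod_def)

lemma pn_smult: "pn (smult (complex_of_real r) p) = \<bar>r\<bar> * pn p"
  by (simp add: pn_def cv_smult)

lemma pconv_const: "pconv (\<lambda>n. p) p" by (simp add: pconv_def)

lemma pconv_add: "pconv X p \<Longrightarrow> pconv Y q \<Longrightarrow> pconv (\<lambda>n. X n + Y n) (p + q)"
  by (auto simp: pconv_def intro!: tendsto_add)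

lemma pconv_diff: "pconv X p \<Longrightarrow> pconv Y q \<Longrightarrow> pconv (\<lambda>n. X n - Y n) (p - q)"
  by (auto simp: pconv_def intro!: tendsto_diff)

lemma pconv_mult: "pconv X p \<Longrightarrow> pconv Y q \<Longrightarrow> pconv (\<lambda>n. X n * Y n) (p * q)"
  unfolding pconv_def coeff_mult by (auto intro!: tendsto_sum tendsto_mult)

lemma pconv_power: "pconv X p \<Longrightarrow> pconv (\<lambda>n. X n ^ k) (p ^ k)"
  by (induction k) (auto intro: pconv_mult pconv_const)

lemma pconv_smult: "(c \<longlongrightarrow> d) sequentially \<Longrightarrow> pconv X p \<Longrightarrow> pconv (\<lambda>n. smult (c n) (X n)) (smult d p)"
  by (auto simp: pconv_def intro!: tendsto_mult)

lemma pconv_pderiv: "pconv X p \<Longrightarrow> pconv (\<lambda>n. pderiv (X n)) (pderiv p)"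
  by (auto simp: pconv_def coeff_pderiv intro!: tendsto_mult)

lemma pconv_unique: "pconv X p \<Longrightarrow> pconv X q \<Longrightarrow> p = q"
  by (auto simp: pconv_def poly_eq_iff intro: LIMSEQ_unique)

lemma pconv_subseq: "pconv X p \<Longrightarrow> strict_mono r \<Longrightarrow> pconv (\<lambda>n. X (r n)) p"
  unfolding pconv_def using LIMSEQ_subseq_LIMSEQ by (fastforce simp: o_def)

lemma pconv_eq: "pconv X p \<Longrightarrow> (\<And>n. X n = Y n) \<Longrightarrow> pconv Y p"
  by (simp add: pconv_def)

lemma pconv_degree: assumes "pconv X p" "\<And>n. degree (X n) \<le> k" shows "degree p \<le> k"
proof (rule degree_le)
  show "\<forall>i>k. coeff p i = 0"
  proof (intro allI impI)
    fix i assume "i > k"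
    then have "(\<lambda>n. coeff (X n) i) = (\<lambda>n. 0)" using assms(2) by (metis coeff_eq_0 le_less_trans)
    moreover have "(\<lambda>n. coeff (X n) i) \<longlonglongrightarrow> coeff p i" using assms(1) by (simp add: pconv_def)
    ultimately show "coeff p i = 0" using LIMSEQ_unique tendsto_const by metis
  qed
qed

lemma pconv_cv: assumes "pconv X p" shows "(\<lambda>n. cv (X n)) \<longlonglongrightarrow> cv p"
  using assms unfolding pconv_def cv_def by (intro tendsto_Pair) auto

lemma pconv_pn: assumes "pconv X p" shows "(\<lambda>n. pn (X n)) \<longlonglongrightarrow> pn p"
  unfolding pn_def using pconv_cv[OF assms] by (rule tendsto_norm)

lemma cv_pconv: fixes X :: "nat \<Rightarrow> complex poly" assumes "(\<lambda>n. cv (X n)) \<longlonglongrightarrow> l" "\<And>n. degree (X n) \<le> 4"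
  shows "pconv X (emb l)"
  unfolding pconv_def
proof
  fix i :: nat
  have c: "(\<lambda>n. fst (cv (X n))) \<longlonglongrightarrow> fst l" "(\<lambda>n. fst (snd (cv (X n)))) \<longlonglongrightarrow> fst (snd l)"
    "(\<lambda>n. fst (snd (snd (cv (X n))))) \<longlonglongrightarrow> fst (snd (snd l))"
    "(\<lambda>n. fst (snd (snd (snd (cv (X n)))))) \<longlonglongrightarrow> fst (snd (snd (snd l)))"
    "(\<lambda>n. snd (snd (snd (snd (cv (X n)))))) \<longlonglongrightarrow> snd (snd (snd (snd l)))"
    using assms(1) by (auto intro!: tendsto_fst tendsto_snd)
  consider "i = 0" | "i = 1" | "i = 2" | "i = 3" | "i = 4" | "i > 4" by linarith
  then show "(\<lambda>n. coeff (X n) i) \<longlonglongrightarrow> coeff (emb l) i"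
  proof cases
    case 6
    then have "coeff (emb l) i = 0" using degree_emb[of l] by (intro coeff_eq_0) simp
    moreover have "(\<lambda>n. coeff (X n) i) = (\<lambda>n. 0)" using 6 assms(2) by (metis coeff_eq_0 le_less_trans)
    ultimately show ?thesis by simp
  qed (use c in \<open>auto simp: emb_def cv_def numeral_eq_Suc\<close>)
qed

lemma pcompact:
  fixes X :: "nat \<Rightarrow> complex poly"
  assumes "\<And>n. degree (X n) \<le> 4" "\<And>n. pn (X n) \<le> M"
  shows "\<exists>r p. strict_mono r \<and> pconv (\<lambda>n. X (r n)) p \<and> degree p \<le> 4"
proof -
  have "bounded (range (\<lambda>n. cv (X n)))"
    using assms(2) by (auto simp: pn_def intro!: boundedI)
  from bounded_imp_convergent_subsequence[OF this]
  obtain l r where r: "strict_mono r" "((\<lambda>n. cv (X n)) \<circ> r) \<longlonglongrightarrow> l"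
    by blast
  have "pconv (\<lambda>n. X (r n)) (emb l)"
    using r(2) assms(1) by (intro cv_pconv) (auto simp: o_def)
  then show ?thesis using r(1) degree_emb by blast
qed



lemma complex_root: "degree (p::complex poly) \<noteq> 0 \<Longrightarrow> \<exists>z. poly p z = 0"
  using fundamental_theorem_of_algebra[of p] constant_degree[of p] by simp


lemma sqf_no_double: assumes "rsquarefree F" "[:-r,1:]^2 dvd F" shows False
proof -
  have "F \<noteq> 0" using assms(1) by (simp add: rsquarefree_def)
  then have "2 \<le> order r F" using assms(2) order_divides by blast
  then show False using assms(1) by (auto simp: rsquarefree_def dest: spec[of _ r])
qed

lemma no_common_root:
  fixes P Q F :: "complex poly"
  assumes "P^2 - Q^3 = F" "rsquarefree F" "poly P r = 0" "poly Q r = 0"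
  shows False
proof -
  have dP: "[:-r,1:] dvd P" and dQ: "[:-r,1:] dvd Q" using assms(3,4) poly_eq_0_iff_dvd by blast+
  have "[:-r,1:]^2 dvd P^2" using dP by (rule dvd_power_same)
  moreover have "[:-r,1:]^2 dvd Q^3"
  proof -
    have "[:-r,1:]^2 dvd Q^2" using dQ by (rule dvd_power_same)
    also have "Q^2 dvd Q^3" by (simp add: le_imp_power_dvd)
    finally show ?thesis .
  qed
  ultimately have "[:-r,1:]^2 dvd F" using assms(1) by (metis dvd_diff)
  then show False using assms(2) sqf_no_double by blast
qed

lemma deg_cases:
  fixes P Q F :: "complex poly"
  assumes "P^2 - Q^3 = F" "degree F = 6" "degree P \<le> 3" "degree Q \<le> 2"
  shows "degree P = 3 \<or> degree Q = 2"
proof (rule ccontr)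
  assume "\<not> ?thesis"
  then have a: "degree P \<le> 2" "degree Q \<le> 1" using assms(3,4) by linarith+
  have "degree (P^2) \<le> degree P * 2" by (rule degree_power_le)
  also have "\<dots> \<le> 4" using a by simp
  finally have 1: "degree (P^2) \<le> 4" .
  have "degree (Q^3) \<le> degree Q * 3" by (rule degree_power_le)
  also have "\<dots> \<le> 4" using a by simp
  finally have 2: "degree (Q^3) \<le> 4" .
  have "degree (P^2 - Q^3) \<le> max (degree (P^2)) (degree (Q^3))" by (rule degree_diff_le_max)
  also have "\<dots> \<le> 4" using 1 2 by simp
  finally have "degree F \<le> 4" using assms(1) by simp
  then show False using assms(2) by simp
qed

lemma loc_alg:
  fixes P0 Q0 U V F :: "complex poly"
  assumes eqF: "P0^2 - Q0^3 = F" and dF: "degree F = 6" and sq: "rsquarefree F"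
    and dU: "degree U \<le> 3" and dV: "degree V \<le> 2" and dP: "degree P0 \<le> 3" and dQ: "degree Q0 \<le> 2"
    and eq: "smult 2 (P0 * U) = smult 3 (Q0^2 * V)"
  shows "U = 0 \<and> V = 0"
proof -
  have F0: "F \<noteq> 0" using dF by auto
  have Q0: "Q0 \<noteq> 0"
  proof
    assume "Q0 = 0"
    then have "F = P0^2" using eqF by simp
    moreover have "degree (P0^2) \<le> degree P0 * 2" by (rule degree_power_le)
    ultimately have "degree P0 \<noteq> 0" using dF by auto
    then obtain r where "poly P0 r = 0" using complex_root by blast
    then show False using no_common_root[OF eqF sq] \<open>Q0 = 0\<close> by simp
  qed
  have P0: "P0 \<noteq> 0"
  proof
    assume "P0 = 0"
    then have "F = -(Q0^3)" using eqF by simp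
    moreover have "degree (Q0^3) \<le> degree Q0 * 3" by (rule degree_power_le)
    ultimately have "degree Q0 \<noteq> 0" using dF by auto
    then obtain r where "poly Q0 r = 0" using complex_root by blast
    then show False using no_common_root[OF eqF sq] \<open>P0 = 0\<close> by simp
  qed
  have cop: "coprime P0 Q0"
  proof -
    let ?g = "gcd P0 Q0"
    have g0: "?g \<noteq> 0" using P0 by simp
    have "degree ?g = 0"
    proof (rule ccontr)
      assume "degree ?g \<noteq> 0"
      then obtain r where r: "poly ?g r = 0" using complex_root by blast
      have "poly P0 r = 0" using r by (metis gcd_dvd1 poly_eq_0_iff_dvd dvd_trans)
      moreover have "poly Q0 r = 0" using r by (metis gcd_dvd2 poly_eq_0_iff_dvd dvd_trans)
      ultimately show False using no_common_root[OF eqF sq] by blast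
    qed
    then have "is_unit ?g" using g0 is_unit_iff_degree by blast
    then show ?thesis using is_unit_gcd by blast
  qed
  then have cop2: "coprime (Q0^2) P0" by (simp add: coprime_commute)
  have "Q0^2 dvd smult 2 (P0 * U)" using eq by (simp add: dvd_smult)
  then have "Q0^2 dvd P0 * U" by (rule dvd_smult_cancel) simp
  then have QU: "Q0^2 dvd U" using cop2 by (simp add: coprime_dvd_mult_right_iff)
  have U0: "U = 0"
  proof (rule ccontr)
    assume U0: "U \<noteq> 0"
    have "degree (Q0^2) \<le> degree U" using QU U0 by (rule dvd_imp_degree_le)
    then have "2 * degree Q0 \<le> 3" using dU Q0 by (simp add: degree_power_eq)
    then have dQ1: "degree Q0 \<le> 1" by simp
    then have dP3: "degree P0 = 3" using deg_cases[OF eqF dF dP dQ] by simp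
    have "V \<noteq> 0" using eq P0 U0 by auto
    have "degree (smult 2 (P0 * U)) = 3 + degree U" using P0 U0 dP3 by (simp add: degree_mult_eq)
    moreover have "degree (smult 3 (Q0^2 * V)) = 2 * degree Q0 + degree V"
      using Q0 \<open>V \<noteq> 0\<close> by (simp add: degree_mult_eq degree_power_eq)
    ultimately show False using eq dV \<open>degree (Q0^2) \<le> degree U\<close> Q0 by (simp add: degree_power_eq)
  qed
  then have "Q0^2 * V = 0" using eq by simp
  then have "V = 0" using Q0 by simp
  with U0 show ?thesis by simp
qed

lemma inf_alg:
  fixes P Q B F :: "complex poly"
  assumes PQ: "P^2 = Q^3" and P0: "P \<noteq> 0" and dP: "degree P \<le> 3" and dQ: "degree Q \<le> 2"
    and dB: "degree B \<le> 4" and eq: "P * B = pderiv F * Q - smult 3 (F * pderiv Q)"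
    and dF: "degree F = 6" and sq: "rsquarefree F"
  shows False
proof -
  have Q0: "Q \<noteq> 0" using PQ P0 by auto
  have deq: "2 * degree P = 3 * degree Q" using PQ P0 Q0 by (metis degree_power_eq)
  have "degree Q = 0 \<or> degree Q = 2" using deq dQ by presburger
  then show False
  proof (elim disjE)
    assume 1: "degree Q = 0"
    then have dP0: "degree P = 0" using deq by simp
    obtain c where c: "Q = [:c:]" using 1 degree_eq_zeroE by blast
    have "c \<noteq> 0" using Q0 c by simp
    have "degree (P * B) \<le> 4" using dP0 dB degree_mult_le[of P B] by simp
    moreover have "degree (pderiv F * Q - smult 3 (F * pderiv Q)) = 5"
      using c \<open>c \<noteq> 0\<close> dF by (simp add: degree_pderiv)
    ultimately show False using eq by simp
  next
    assume 2: "degree Q = 2"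
    then have dP3: "degree P = 3" using deq by simp
    obtain a where a: "poly Q a = 0" using complex_root[of Q] 2 by auto
    define L where "L = [:-a, 1:]"
    have L0: "L \<noteq> 0" by (simp add: L_def)
    have oPQ: "2 * order a P = 3 * order a Q"
    proof -
      have "order a (P*P) = order a (Q*Q*Q)" using PQ by (simp add: power2_eq_square power3_eq_cube)
      then show ?thesis using P0 Q0 by (simp add: order_mult)
    qed
    have "order a Q \<noteq> 0" using a Q0 order_root by blast
    moreover have "order a Q \<le> 2" using order_degree[OF Q0, of a] 2 by simp
    ultimately have oQ: "order a Q = 2" using oPQ by presburger
    then have oP: "order a P = 3" using oPQ by simp
    obtain K where K: "Q = L^2 * K" using oQ order_divides[of a 2 Q] unfolding L_def by (auto elim: dvdE)
    obtain M where M: "P = L^3 * M" using oP order_divides[of a 3 P] unfolding L_def by (auto elim: dvdE)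
    have "degree Q = 2 + degree K" using K Q0 L0 by (simp add: degree_mult_eq degree_power_eq L_def)
    then obtain c where c: "K = [:c:]" using \<open>degree Q = 2 + degree K\<close> 2 degree_eq_zeroE by (metis add_cancel_right_right)
    have "degree P = 3 + degree M" using M P0 L0 by (simp add: degree_mult_eq degree_power_eq L_def)
    then obtain d where d: "M = [:d:]" using dP3 degree_eq_zeroE by (metis add_cancel_right_right)
    have pL: "pderiv L = 1" by (simp add: L_def pderiv_pCons)
    have L2: "smult 2 L = L + L" by (metis one_add_one smult_add_left smult_1_left)
    have pQ: "pderiv Q = smult (2*c) L"
    proof -
      have "pderiv Q = smult c (pderiv (L*L))" unfolding K c by (simp add: power2_eq_square pderiv_smult mult.commute)
      also have "pderiv (L*L) = L + L" by (simp add: pderiv_mult pL)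
      finally show ?thesis using L2 by (metis smult_smult mult.commute)
    qed
    have e1: "L * (L * (L * (smult d B))) = L * (L * smult c (pderiv F)) - L * smult (6*c) F"
    proof -
      have Qs: "Q = smult c (L^2)" using K c by simp
      have Ps: "P = smult d (L^3)" using M d by simp
      have "P * B = pderiv F * Q - smult 3 (F * smult (2*c) L)" using eq pQ by simp
      then show ?thesis unfolding Qs Ps by (simp add: power2_eq_square power3_eq_cube algebra_simps)
    qed
    then have e2: "L * (L * (smult d B)) = L * smult c (pderiv F) - smult (6*c) F"
    proof -
      have "L * (L * (L * (smult d B))) = L * (L * smult c (pderiv F) - smult (6*c) F)"
        using e1 by (simp add: right_diff_distrib)
      then show ?thesis using L0 mult_left_cancel by blast
    qed
    have "smult (6*c) F = L * (smult c (pderiv F) - L * smult d B)"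
      using e2 by (simp add: algebra_simps)
    then have "L dvd smult (6*c) F" by simp
    then have "L dvd F" by (rule dvd_smult_cancel) (use Q0 K c in auto)
    then obtain F1 where F1: "F = L * F1" by (elim dvdE)
    have pF: "pderiv F = F1 + L * pderiv F1" unfolding F1 by (simp add: pderiv_mult pL)
    have e3: "L * (L * (smult d B)) = L * (smult c (L * pderiv F1) - smult (5*c) F1)"
    proof -
      have A: "L * (L * smult d B) = L * smult c (F1 + L * pderiv F1) - smult (6*c) (L * F1)"
        using e2 unfolding pF by (simp add: F1)
      have c6: "6*c = c + 5*c" by simp
      have B: "smult (6*c) (L*F1) = smult c (L*F1) + smult (5*c) (L*F1)"
        by (simp only: c6 smult_add_left)
      show ?thesis using A unfolding B by (simp add: algebra_simps smult_add_right)
    qed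
    then have "L * smult d B = smult c (L * pderiv F1) - smult (5*c) F1" using L0 mult_left_cancel by blast
    then have "smult (5*c) F1 = L * (smult c (pderiv F1) - smult d B)" by (simp add: algebra_simps)
    then have "L dvd smult (5*c) F1" by simp
    then have "L dvd F1" by (rule dvd_smult_cancel) (use Q0 K c in auto)
    then have "L^2 dvd F" unfolding F1 power2_eq_square by simp
    then show False using sq sqf_no_double unfolding L_def by blast
  qed
qed



lemma smult_conv: "smult c p = [:c:] * p" by simp

lemma pconv_cpoly: "(c \<longlongrightarrow> d) sequentially \<Longrightarrow> pconv (\<lambda>n. [:c n:]) [:d:]"
  unfolding pconv_def by (auto simp: coeff_pCons split: nat.split)

lemma div_lemma:
  fixes A B :: "nat \<Rightarrow> complex poly"
  assumes A: "pconv A A0" and A0: "A0 \<noteq> 0" and dB: "\<And>n. degree (B n) \<le> 4"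
    and C: "pconv (\<lambda>n. A n * B n) C"
  shows "\<exists>r B0. strict_mono r \<and> pconv (\<lambda>n. B (r n)) B0"
proof -
  define m where "m n = 1 + pn (B n)" for n
  have m1: "m n \<ge> 1" for n using pn_nonneg[of "B n"] by (simp add: m_def)
  define w where "w n = smult (complex_of_real (1 / m n)) (B n)" for n
  have pnw: "pn (w n) + 1 / m n = 1" for n
  proof -
    have "pn (w n) = \<bar>1 / m n\<bar> * pn (B n)" unfolding w_def by (rule pn_smult)
    then have "pn (w n) = pn (B n) / m n" using m1[of n] by simp
    then show ?thesis using m1[of n] by (simp add: m_def field_simps)
  qed
  have dw: "degree (w n) \<le> 4" for n unfolding w_def using order.trans[OF degree_smult_le dB[of n]] .
  have bw: "pn (w n) \<le> 1" for n
  proof -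
    have "1 / m n \<ge> 0" using m1[of n] by simp
    then show ?thesis using pnw[of n] by linarith
  qed
  obtain r1 W where r1: "strict_mono r1" "pconv (\<lambda>n. w (r1 n)) W" "degree W \<le> 4"
    using pcompact[of w 1, OF dw bw] by blast
  define s where "s n = 1 / m (r1 n)" for n
  have "bounded (range s)"
  proof (rule boundedI[where B=1])
    fix x assume "x \<in> range s"
    then obtain n where "x = s n" by blast
    then show "norm x \<le> 1" using m1[of "r1 n"] by (simp add: s_def)
  qed
  from bounded_imp_convergent_subsequence[OF this]
  obtain s0 r2 where r2: "strict_mono r2" "(s \<circ> r2) \<longlonglongrightarrow> s0" by blast
  define r where "r = r1 \<circ> r2"
  have r: "strict_mono r" using r1(1) r2(1) by (simp add: r_def strict_mono_o)
  have wr: "pconv (\<lambda>n. w (r n)) W" using pconv_subseq[OF r1(2) r2(1)] by (simp add: r_def)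
  have sr: "(\<lambda>n. 1 / m (r n)) \<longlonglongrightarrow> s0" using r2(2) by (simp add: s_def r_def o_def)
  have "(\<lambda>n. pn (w (r n)) + 1 / m (r n)) \<longlonglongrightarrow> pn W + s0"
    by (intro tendsto_add pconv_pn wr sr)
  then have sum1: "pn W + s0 = 1" using pnw by (simp add: LIMSEQ_const_iff)
  have s0: "s0 \<ge> 0"
  proof (rule LIMSEQ_le_const[OF sr])
    show "\<exists>N. \<forall>n\<ge>N. 0 \<le> 1 / m (r n)" using m1 by (metis dual_order.trans zero_le_divide_1_iff zero_le_one)
  qed
  show ?thesis
  proof (cases "s0 = 0")
    case False
    then have s0p: "s0 > 0" using s0 by simp
    have "((\<lambda>n. complex_of_real (1 / (1 / m (r n)))) \<longlongrightarrow> complex_of_real (1 / s0)) sequentially"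
      by (intro tendsto_of_real tendsto_divide tendsto_const sr) (use s0p in auto)
    then have "pconv (\<lambda>n. smult (complex_of_real (1 / (1 / m (r n)))) (w (r n))) (smult (complex_of_real (1/s0)) W)"
      using wr by (rule pconv_smult)
    moreover have "smult (complex_of_real (1 / (1 / m (r n)))) (w (r n)) = B (r n)" for n
      using m1[of "r n"] by (simp add: w_def)
    ultimately have "pconv (\<lambda>n. B (r n)) (smult (complex_of_real (1/s0)) W)" by simp
    then show ?thesis using r by blast
  next
    case True
    then have "pn W = 1" using sum1 by simp
    then have W0: "W \<noteq> 0" by auto
    have "((\<lambda>n. complex_of_real (1 / m (r n))) \<longlongrightarrow> complex_of_real 0) sequentially"
      using sr True by (intro tendsto_of_real) simp
    then have "pconv (\<lambda>n. smult (complex_of_real (1 / m (r n))) (A (r n) * B (r n))) (smult (complex_of_real 0) C)"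
      using pconv_subseq[OF C r] by (rule pconv_smult)
    moreover have "smult (complex_of_real (1 / m (r n))) (A (r n) * B (r n)) = A (r n) * w (r n)" for n
      by (simp add: w_def)
    ultimately have "pconv (\<lambda>n. A (r n) * w (r n)) 0" by simp
    moreover have "pconv (\<lambda>n. A (r n) * w (r n)) (A0 * W)"
      by (intro pconv_mult wr pconv_subseq[OF A r])
    ultimately have "A0 * W = 0" using pconv_unique by blast
    then show ?thesis using A0 W0 by simp
  qed
qed


lemma degree_diff_le4:
  fixes p q :: "complex poly"
  assumes "degree p \<le> k" "degree q \<le> k" shows "degree (p - q) \<le> k"
  using assms degree_diff_le by blast

lemma pn_pos: "degree p \<le> 4 \<Longrightarrow> p \<noteq> 0 \<Longrightarrow> pn p > 0"
  using pn_nonneg[of p] pn_zero_iff[of p] by linarith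

lemma local_lemma:
  fixes P Q :: "nat \<Rightarrow> complex poly"
  assumes eqF: "P0^2 - Q0^3 = F" and dF: "degree F = 6" and sq: "rsquarefree F"
    and dP0: "degree P0 \<le> 3" and dQ0: "degree Q0 \<le> 2"
    and eqn: "\<And>n. P n ^ 2 - Q n ^ 3 = F" and dP: "\<And>n. degree (P n) \<le> 3" and dQ: "\<And>n. degree (Q n) \<le> 2"
    and cP: "pconv P P0" and cQ: "pconv Q Q0" and ne: "\<And>n. (P n, Q n) \<noteq> (P0, Q0)"
  shows False
proof -
  define e where "e n = pn (P n - P0) + pn (Q n - Q0)" for n
  have dPd: "degree (P n - P0) \<le> 3" for n using dP[of n] dP0 by (rule degree_diff_le4)
  have dQd: "degree (Q n - Q0) \<le> 2" for n using dQ[of n] dQ0 by (rule degree_diff_le4)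
  have epos: "e n > 0" for n
  proof (cases "P n = P0")
    case True
    then have "Q n - Q0 \<noteq> 0" using ne[of n] by auto
    then have "pn (Q n - Q0) > 0" using dQd[of n] by (intro pn_pos) auto
    then show ?thesis using pn_nonneg[of "P n - P0"] by (simp add: e_def)
  next
    case False
    then have "pn (P n - P0) > 0" using dPd[of n] by (intro pn_pos) auto
    then show ?thesis using pn_nonneg[of "Q n - Q0"] by (simp add: e_def)
  qed
  have e0: "e \<longlonglongrightarrow> 0"
  proof -
    have "(\<lambda>n. pn (P n - P0) + pn (Q n - Q0)) \<longlonglongrightarrow> pn (P0 - P0) + pn (Q0 - Q0)"
      by (intro tendsto_add pconv_pn pconv_diff cP cQ pconv_const)
    moreover have "e = (\<lambda>n. pn (P n - P0) + pn (Q n - Q0))" by (simp add: fun_eq_iff e_def)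
    ultimately show ?thesis by simp
  qed
  define U where "U n = smult (complex_of_real (1 / e n)) (P n - P0)" for n
  define V where "V n = smult (complex_of_real (1 / e n)) (Q n - Q0)" for n
  have pnUV: "pn (U n) + pn (V n) = 1" for n
  proof -
    have "pn (U n) = \<bar>1 / e n\<bar> * pn (P n - P0)" unfolding U_def by (rule pn_smult)
    moreover have "pn (V n) = \<bar>1 / e n\<bar> * pn (Q n - Q0)" unfolding V_def by (rule pn_smult)
    ultimately have "pn (U n) + pn (V n) = (pn (P n - P0) + pn (Q n - Q0)) / e n"
      using epos[of n] by (simp add: add_divide_distrib)
    then show ?thesis using epos[of n] by (simp add: e_def)
  qed
  have dU: "degree (U n) \<le> 3" for n unfolding U_def using order.trans[OF degree_smult_le dPd[of n]] .
  have dV: "degree (V n) \<le> 2" for n unfolding V_def using order.trans[OF degree_smult_le dQd[of n]] .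
  have dU4: "degree (U n) \<le> 4" for n using dU[of n] by simp
  have dV4: "degree (V n) \<le> 4" for n using dV[of n] by simp
  have bU: "pn (U n) \<le> 1" for n using pnUV[of n] pn_nonneg[of "V n"] by linarith
  have bV: "pn (V n) \<le> 1" for n using pnUV[of n] pn_nonneg[of "U n"] by linarith
  obtain r1 U0 where r1: "strict_mono r1" "pconv (\<lambda>n. U (r1 n)) U0"
    using pcompact[of U 1, OF dU4 bU] by blast
  obtain r2 V0 where r2: "strict_mono r2" "pconv (\<lambda>n. V (r1 (r2 n))) V0"
    using pcompact[of "\<lambda>n. V (r1 n)" 1, OF dV4 bV] by blast
  define r where "r = r1 \<circ> r2"
  have r: "strict_mono r" using r1(1) r2(1) by (simp add: r_def strict_mono_o)
  have cU: "pconv (\<lambda>n. U (r n)) U0" using pconv_subseq[OF r1(2) r2(1)] by (simp add: r_def)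
  have cV: "pconv (\<lambda>n. V (r n)) V0" using r2(2) by (simp add: r_def)
  have dU0: "degree U0 \<le> 3" using cU dU by (rule pconv_degree)
  have dV0: "degree V0 \<le> 2" using cV dV by (rule pconv_degree)
  have "(\<lambda>n. pn (U (r n)) + pn (V (r n))) \<longlonglongrightarrow> pn U0 + pn V0"
    by (intro tendsto_add pconv_pn cU cV)
  then have sum1: "pn U0 + pn V0 = 1" using pnUV by (simp add: LIMSEQ_const_iff)
  define a where "a n = complex_of_real (e n)" for n
  define R where "R n = 2 * P0 * U n - 3 * Q0^2 * V n + [:a n:] * (U n ^ 2 - 3 * Q0 * V n ^ 2)
      - [:a n:] * ([:a n:] * V n ^ 3)" for n
  have R0: "R n = 0" for n
  proof -
    have an: "a n \<noteq> 0" using epos[of n] by (simp add: a_def)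
    have PU: "P n = P0 + [:a n:] * U n" using an by (simp add: U_def a_def)
    have QV: "Q n = Q0 + [:a n:] * V n" using an by (simp add: V_def a_def)
    have "(P0 + [:a n:] * U n) ^ 2 - (Q0 + [:a n:] * V n) ^ 3 = P0^2 - Q0^3"
      using eqn[of n] eqF unfolding PU QV by simp
    then have "[:a n:] * R n = 0" unfolding R_def by algebra
    then show ?thesis using an by simp
  qed
  have ca: "((\<lambda>n. a (r n)) \<longlongrightarrow> 0) sequentially"
  proof -
    have "(\<lambda>n. e (r n)) \<longlonglongrightarrow> 0" using LIMSEQ_subseq_LIMSEQ[OF e0 r] by (simp add: o_def)
    then have "((\<lambda>n. complex_of_real (e (r n))) \<longlongrightarrow> complex_of_real 0) sequentially" by (rule tendsto_of_real)
    then show ?thesis by (simp add: a_def)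
  qed
  have caP: "pconv (\<lambda>n. [:a (r n):]) 0" using pconv_cpoly[OF ca] by simp
  have "pconv (\<lambda>n. R (r n)) (2 * P0 * U0 - 3 * Q0^2 * V0 + 0 * (U0 ^ 2 - 3 * Q0 * V0 ^ 2) - 0 * (0 * V0 ^ 3))"
    unfolding R_def
    by (intro pconv_add pconv_diff pconv_mult pconv_power pconv_const cU cV caP)
  moreover have "pconv (\<lambda>n. R (r n)) 0" using R0 pconv_const by simp
  ultimately have "2 * P0 * U0 - 3 * Q0^2 * V0 = 0" using pconv_unique by fastforce
  then have "smult 2 (P0 * U0) = smult 3 (Q0^2 * V0)" by (simp add: numeral_mult_conv_smult mult.assoc)
  then have "U0 = 0 \<and> V0 = 0" using loc_alg[OF eqF dF sq dU0 dV0 dP0 dQ0] by blast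
  then show False using sum1 by simp
qed


lemma wr_identity:
  fixes P Q :: "complex poly"
  shows "P * (2 * pderiv P * Q - 3 * P * pderiv Q) = pderiv (P^2 - Q^3) * Q - 3 * (P^2 - Q^3) * pderiv Q"
  unfolding pderiv_diff power2_eq_square power3_eq_cube pderiv_mult by algebra

lemma degree_mult_le_sum:
  fixes a b :: "complex poly"
  assumes "degree a \<le> m" "degree b \<le> k" shows "degree (a * b) \<le> m + k"
  using order.trans[OF degree_mult_le add_mono[OF assms]] .

lemma infty_lemma:
  fixes P Q :: "nat \<Rightarrow> complex poly" and \<sigma> :: "nat \<Rightarrow> real"
  assumes eqn: "\<And>n. P n ^ 2 - Q n ^ 3 = smult (complex_of_real (\<sigma> n ^ 6)) F"
    and spos: "\<And>n. \<sigma> n > 0" and s0: "\<sigma> \<longlonglongrightarrow> 0"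
    and dP: "\<And>n. degree (P n) \<le> 3" and dQ: "\<And>n. degree (Q n) \<le> 2"
    and cP: "pconv P Ps" and cQ: "pconv Q Qs" and nz: "Ps \<noteq> 0 \<or> Qs \<noteq> 0"
    and dF: "degree F = 6" and sq: "rsquarefree F"
  shows False
proof -
  have cs: "((\<lambda>n. complex_of_real (\<sigma> n ^ 6)) \<longlongrightarrow> complex_of_real (0 ^ 6)) sequentially"
    by (intro tendsto_of_real tendsto_power s0)
  have "pconv (\<lambda>n. P n ^ 2 - Q n ^ 3) (Ps^2 - Qs^3)" by (intro pconv_diff pconv_power cP cQ)
  moreover have "pconv (\<lambda>n. P n ^ 2 - Q n ^ 3) (smult (complex_of_real (0 ^ 6)) F)"
    unfolding eqn by (rule pconv_smult[OF cs pconv_const])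
  ultimately have "Ps^2 - Qs^3 = 0" using pconv_unique by fastforce
  then have PQ: "Ps^2 = Qs^3" by simp
  have Ps0: "Ps \<noteq> 0" using PQ nz by auto
  have dPs: "degree Ps \<le> 3" using cP dP by (rule pconv_degree)
  have dQs: "degree Qs \<le> 2" using cQ dQ by (rule pconv_degree)
  define W where "W n = 2 * pderiv (P n) * Q n - 3 * P n * pderiv (Q n)" for n
  define B where "B n = smult (complex_of_real (1 / \<sigma> n ^ 6)) (W n)" for n
  have PB: "P n * B n = pderiv F * Q n - 3 * F * pderiv (Q n)" for n
  proof -
    define c where "c = complex_of_real (\<sigma> n ^ 6)"
    have c0: "c \<noteq> 0" using spos[of n] by (simp add: c_def)
    have "P n * W n = pderiv (smult c F) * Q n - 3 * smult c F * pderiv (Q n)"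
      using wr_identity[of "P n" "Q n"] eqn[of n] by (simp add: W_def c_def)
    also have "\<dots> = [:c:] * (pderiv F * Q n - 3 * F * pderiv (Q n))"
      unfolding pderiv_smult unfolding smult_conv by algebra
    finally have "P n * W n = smult c (pderiv F * Q n - 3 * F * pderiv (Q n))" by simp
    moreover have "B n = smult (1 / c) (W n)" by (simp add: B_def c_def)
    ultimately show ?thesis using c0 by (simp add: mult_smult_right)
  qed
  have dB: "degree (B n) \<le> 4" for n
  proof -
    have "degree (pderiv (P n)) \<le> 2" using dP[of n] by (simp add: degree_pderiv)
    then have "degree (2 * pderiv (P n) * Q n) \<le> 4"
      using degree_mult_le_sum[OF degree_mult_le_sum[of 2 0 "pderiv (P n)" 2] dQ[of n]] by simp
    moreover have "degree (pderiv (Q n)) \<le> 1" using dQ[of n] by (simp add: degree_pderiv)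
    then have "degree (3 * P n * pderiv (Q n)) \<le> 4"
      using degree_mult_le_sum[OF degree_mult_le_sum[of 3 0 "P n" 3] \<open>degree (pderiv (Q n)) \<le> 1\<close>] dP[of n] by simp
    ultimately have "degree (W n) \<le> 4" unfolding W_def by (rule degree_diff_le4)
    then show ?thesis unfolding B_def using order.trans[OF degree_smult_le] by blast
  qed
  define C0 where "C0 = pderiv F * Qs - 3 * F * pderiv Qs"
  have cC: "pconv (\<lambda>n. P n * B n) C0"
    unfolding PB C0_def by (intro pconv_diff pconv_mult pconv_const pconv_pderiv cQ)
  obtain r B0 where r: "strict_mono r" "pconv (\<lambda>n. B (r n)) B0"
    using div_lemma[OF cP Ps0 dB cC] by blast
  have dB0: "degree B0 \<le> 4" using r(2) dB by (rule pconv_degree)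
  have "pconv (\<lambda>n. P (r n) * B (r n)) (Ps * B0)" by (intro pconv_mult r(2) pconv_subseq[OF cP r(1)])
  moreover have "pconv (\<lambda>n. P (r n) * B (r n)) C0" using pconv_subseq[OF cC r(1)] by simp
  ultimately have "Ps * B0 = C0" using pconv_unique by blast
  then have "Ps * B0 = pderiv F * Qs - smult 3 (F * pderiv Qs)"
    by (simp add: C0_def numeral_mult_conv_smult mult.assoc)
  then show False using inf_alg[OF PQ Ps0 dPs dQs dB0 _ dF sq] by blast
qed



lemma finite_S:
  fixes F :: "complex poly"
  assumes dF: "degree F = 6" and sq: "rsquarefree F"
  shows "finite {(P, Q). degree P \<le> 3 \<and> degree Q \<le> 2 \<and> P^2 - Q^3 = F}" (is "finite ?S")
proof (rule ccontr)
  define S where "S = ?S"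
  assume "infinite ?S"
  then have "infinite S" by (simp add: S_def)
  then have "\<exists>f::nat \<Rightarrow> complex poly \<times> complex poly. inj f \<and> range f \<subseteq> S" by (simp only: infinite_iff_countable_subset)
  then obtain f :: "nat \<Rightarrow> complex poly \<times> complex poly" where finj: "inj f" and fS: "range f \<subseteq> S" by blast
  define P where "P n = fst (f n)" for n
  define Q where "Q n = snd (f n)" for n
  have fPQ: "f n = (P n, Q n)" for n by (simp add: P_def Q_def)
  have SPQ: "degree (P n) \<le> 3 \<and> degree (Q n) \<le> 2 \<and> P n ^ 2 - Q n ^ 3 = F" for n
  proof -
    have "f n \<in> S" using fS by blast
    then show ?thesis unfolding S_def fPQ by simp
  qed
  define t where "t n = 1 + root 3 (pn (P n)) + sqrt (pn (Q n))" for n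
  have rt: "root 3 (pn (P n)) \<ge> 0" "sqrt (pn (Q n)) \<ge> 0" for n using pn_nonneg by auto
  have t1: "t n \<ge> 1" for n using rt[of n] by (simp add: t_def)
  define \<sigma> where "\<sigma> n = 1 / t n" for n
  have spos: "\<sigma> n > 0" for n using t1[of n] by (simp add: \<sigma>_def)
  have sle: "\<sigma> n \<le> 1" for n using t1[of n] by (simp add: \<sigma>_def)
  define Pt where "Pt n = smult (complex_of_real (\<sigma> n ^ 3)) (P n)" for n
  define Qt where "Qt n = smult (complex_of_real (\<sigma> n ^ 2)) (Q n)" for n
  have pnPt: "pn (Pt n) = \<sigma> n ^ 3 * pn (P n)" for n
    unfolding Pt_def pn_smult using spos[of n] by simp
  have pnQt: "pn (Qt n) = \<sigma> n ^ 2 * pn (Q n)" for n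
    unfolding Qt_def pn_smult using spos[of n] by simp
  have ident: "\<sigma> n + root 3 (pn (Pt n)) + sqrt (pn (Qt n)) = 1" for n
  proof -
    have "root 3 (pn (Pt n)) = \<sigma> n * root 3 (pn (P n))"
      unfolding pnPt real_root_mult using real_root_pos2[of 3 "\<sigma> n"] spos[of n] by simp
    moreover have "sqrt (pn (Qt n)) = \<sigma> n * sqrt (pn (Q n))"
      unfolding pnQt real_sqrt_mult real_sqrt_abs using spos[of n] by simp
    ultimately have "\<sigma> n + root 3 (pn (Pt n)) + sqrt (pn (Qt n)) = \<sigma> n * t n"
      by (simp add: t_def algebra_simps)
    then show ?thesis using t1[of n] by (simp add: \<sigma>_def)
  qed
  have dPt: "degree (Pt n) \<le> 3" for n unfolding Pt_def using order.trans[OF degree_smult_le] SPQ by blast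
  have dQt: "degree (Qt n) \<le> 2" for n unfolding Qt_def using order.trans[OF degree_smult_le] SPQ by blast
  have dPt4: "degree (Pt n) \<le> 4" for n using dPt[of n] by simp
  have dQt4: "degree (Qt n) \<le> 4" for n using dQt[of n] by simp
  have bPt: "pn (Pt n) \<le> 1" for n
  proof -
    have "root 3 (pn (Pt n)) \<le> 1" using ident[of n] spos[of n] real_sqrt_ge_zero[OF pn_nonneg[of "Qt n"]] by linarith
    then show ?thesis by simp
  qed
  have bQt: "pn (Qt n) \<le> 1" for n
  proof -
    have "root 3 (pn (Pt n)) \<ge> 0" using pn_nonneg[of "Pt n"] by simp
    then have "sqrt (pn (Qt n)) \<le> 1" using ident[of n] spos[of n] by linarith
    then show ?thesis by simp
  qed
  obtain r1 Ps where r1: "strict_mono r1" "pconv (\<lambda>n. Pt (r1 n)) Ps"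
    using pcompact[of Pt 1, OF dPt4 bPt] by blast
  obtain r2 Qs where r2: "strict_mono r2" "pconv (\<lambda>n. Qt (r1 (r2 n))) Qs"
    using pcompact[of "\<lambda>n. Qt (r1 n)" 1, OF dQt4 bQt] by blast
  have "bounded (range (\<lambda>n. \<sigma> (r1 (r2 n))))"
  proof (rule boundedI[where B=1])
    fix x assume "x \<in> range (\<lambda>n. \<sigma> (r1 (r2 n)))"
    then obtain n where "x = \<sigma> (r1 (r2 n))" by blast
    then show "norm x \<le> 1" using spos[of "r1 (r2 n)"] sle[of "r1 (r2 n)"] by simp
  qed
  from bounded_imp_convergent_subsequence[OF this]
  obtain s0 r3 where r3: "strict_mono r3" "((\<lambda>n. \<sigma> (r1 (r2 n))) \<circ> r3) \<longlonglongrightarrow> s0" by blast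
  define r where "r = r1 \<circ> r2 \<circ> r3"
  have r: "strict_mono r" using r1(1) r2(1) r3(1) by (simp add: r_def strict_mono_o)
  have cPt: "pconv (\<lambda>n. Pt (r n)) Ps"
    using pconv_subseq[OF pconv_subseq[OF r1(2) r2(1)] r3(1)] by (simp add: r_def)
  have cQt: "pconv (\<lambda>n. Qt (r n)) Qs"
    using pconv_subseq[OF r2(2) r3(1)] by (simp add: r_def)
  have cs: "(\<lambda>n. \<sigma> (r n)) \<longlonglongrightarrow> s0" using r3(2) by (simp add: r_def o_def)
  have "(\<lambda>n. \<sigma> (r n) + root 3 (pn (Pt (r n))) + sqrt (pn (Qt (r n)))) \<longlonglongrightarrow> s0 + root 3 (pn Ps) + sqrt (pn Qs)"
    by (intro tendsto_add tendsto_real_root tendsto_real_sqrt pconv_pn cPt cQt cs)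
  then have lim1: "s0 + root 3 (pn Ps) + sqrt (pn Qs) = 1" using ident by (simp add: LIMSEQ_const_iff)
  have s0: "s0 \<ge> 0"
    by (rule LIMSEQ_le_const[OF cs]) (use spos in \<open>auto intro: less_imp_le\<close>)
  show False
  proof (cases "s0 = 0")
    case True
    have nz: "Ps \<noteq> 0 \<or> Qs \<noteq> 0" using lim1 True by auto
    have eqn: "Pt (r n) ^ 2 - Qt (r n) ^ 3 = smult (complex_of_real (\<sigma> (r n) ^ 6)) F" for n
    proof -
      have "Pt (r n) ^ 2 - Qt (r n) ^ 3 = smult (complex_of_real (\<sigma> (r n) ^ 6)) (P (r n) ^ 2 - Q (r n) ^ 3)"
        unfolding Pt_def Qt_def smult_power smult_diff_right of_real_power[symmetric] power_mult[symmetric]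
        by simp
      then show ?thesis using SPQ by simp
    qed
    show False
      by (rule infty_lemma[OF eqn spos cs[unfolded True] dPt dQt cPt cQt nz dF sq])
  next
    case False
    then have s0p: "s0 > 0" using s0 by simp
    define P0 where "P0 = smult (complex_of_real (1 / s0 ^ 3)) Ps"
    define Q0 where "Q0 = smult (complex_of_real (1 / s0 ^ 2)) Qs"
    have cP: "pconv (\<lambda>n. P (r n)) P0"
    proof -
      have "((\<lambda>n. complex_of_real (1 / \<sigma> (r n) ^ 3)) \<longlongrightarrow> complex_of_real (1 / s0 ^ 3)) sequentially"
        by (intro tendsto_of_real tendsto_divide tendsto_power tendsto_const cs) (use s0p in auto)
      from pconv_smult[OF this cPt] have "pconv (\<lambda>n. smult (complex_of_real (1 / \<sigma> (r n) ^ 3)) (Pt (r n))) P0"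
        unfolding P0_def .
      moreover have "smult (complex_of_real (1 / \<sigma> (r n) ^ 3)) (Pt (r n)) = P (r n)" for n
        using spos[of "r n"] by (simp add: Pt_def)
      ultimately show ?thesis by (rule pconv_eq)
    qed
    have cQ: "pconv (\<lambda>n. Q (r n)) Q0"
    proof -
      have "((\<lambda>n. complex_of_real (1 / \<sigma> (r n) ^ 2)) \<longlongrightarrow> complex_of_real (1 / s0 ^ 2)) sequentially"
        by (intro tendsto_of_real tendsto_divide tendsto_power tendsto_const cs) (use s0p in auto)
      from pconv_smult[OF this cQt] have "pconv (\<lambda>n. smult (complex_of_real (1 / \<sigma> (r n) ^ 2)) (Qt (r n))) Q0"
        unfolding Q0_def .
      moreover have "smult (complex_of_real (1 / \<sigma> (r n) ^ 2)) (Qt (r n)) = Q (r n)" for n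
        using spos[of "r n"] by (simp add: Qt_def)
      ultimately show ?thesis by (rule pconv_eq)
    qed
    have dP0: "degree P0 \<le> 3" by (rule pconv_degree[OF cP]) (use SPQ in blast)
    have dQ0: "degree Q0 \<le> 2" by (rule pconv_degree[OF cQ]) (use SPQ in blast)
    have "pconv (\<lambda>n. P (r n) ^ 2 - Q (r n) ^ 3) (P0^2 - Q0^3)" by (intro pconv_diff pconv_power cP cQ)
    moreover have "pconv (\<lambda>n. P (r n) ^ 2 - Q (r n) ^ 3) F" using SPQ pconv_const by simp
    ultimately have eqF: "P0^2 - Q0^3 = F" using pconv_unique by blast
    obtain N where N: "\<And>n. n \<ge> N \<Longrightarrow> (P (r n), Q (r n)) \<noteq> (P0, Q0)"
    proof (cases "\<exists>m. (P (r m), Q (r m)) = (P0, Q0)")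
      case True
      then obtain m where m: "(P (r m), Q (r m)) = (P0, Q0)" by blast
      show ?thesis
      proof (rule that[of "Suc m"])
        fix n assume "n \<ge> Suc m"
        then have "r n \<noteq> r m" using strict_mono_eq[OF r] by simp
        then have "f (r n) \<noteq> f (r m)" using finj by (simp add: inj_eq)
        then show "(P (r n), Q (r n)) \<noteq> (P0, Q0)" using m fPQ[of "r n"] fPQ[of "r m"] by simp
      qed
    next
      case False
      then show ?thesis using that[of 0] by blast
    qed
    have sm: "strict_mono (\<lambda>n. n + N)" by (simp add: strict_mono_def)
    show False
    proof (rule local_lemma[OF eqF dF sq dP0 dQ0])
      show "P (r (n + N)) ^ 2 - Q (r (n + N)) ^ 3 = F" for n using SPQ by blast
      show "degree (P (r (n + N))) \<le> 3" for n using SPQ by blast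
      show "degree (Q (r (n + N))) \<le> 2" for n using SPQ by blast
      show "pconv (\<lambda>n. P (r (n + N))) P0" using pconv_subseq[OF cP sm] by simp
      show "pconv (\<lambda>n. Q (r (n + N))) Q0" using pconv_subseq[OF cQ sm] by simp
      show "(P (r (n + N)), Q (r (n + N))) \<noteq> (P0, Q0)" for n using N by simp
    qed
  qed
qed


theorem mainTheorem10:
  fixes F :: "complex poly"
  assumes "degree F = 6" and "rsquarefree F"
  shows "finite {(P :: complex poly, Q :: complex poly).
            degree P = 3 \<and> degree Q = 2 \<and> F = P ^ 2 - Q ^ 3}"
  by (rule finite_subset[OF _ finite_S[OF assms]]) auto

end
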